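(* Let $1/\sqrt5\le c<3/2$ and $y_n=c/n^2$. Then the closed set $\mathcal E_c\subset\mathcal M$ satisfies $\mu_{\mathcal M}(\mathcal E_c)<1$, and for every irrational $x\in[0,1)$, $\mathcal R_n(x,y_n)\subset\mathcal E_c$ for infinitely many $n\in\mathbb N$.
   Context: $\Gamma=\mathrm{SL}_2(\mathbb Z)$, $\mathcal M=\Gamma\backslash\mathbb H$, $\mu_{\mathcal M}=\frac3\pi\frac{dx\,dy}{y^2}$ the normalized hyperbolic area. For $c>0$, $\mathcal E_c$ is the image under $\mathbb H\to\mathcal M$ of $\{z\in\mathbb H:\mathrm{Im}(z)\in[\tfrac1{2c},\tfrac1c]\cup[\tfrac2c,\tfrac4c]\cup[\tfrac9{2c},\infty)\}$. $\mathcal R_n(x,y)=\{\Gamma(x+\tfrac jn+iy):0\le j\le n-1\}$. *)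

theory Defs
  imports "HOL-Analysis.Analysis"
begin

definition H :: "complex set" where
  "H = {z. Im z > 0}"

definition SL2Z :: "(int \<times> int \<times> int \<times> int) set" where
  "SL2Z = {(a,b,c,d). a*d - b*c = 1}"

fun moeb :: "int \<times> int \<times> int \<times> int \<Rightarrow> complex \<Rightarrow> complex" where
  "moeb (a,b,c,d) z = (of_int a * z + of_int b) / (of_int c * z + of_int d)"

text \<open>The set of imaginary parts defining E_c (its lift to H before taking the orbit).\<close>
definition Ic :: "real \<Rightarrow> real set" where
  "Ic c = {1/(2*c) .. 1/c} \<union> {2/c .. 4/c} \<union> {9/(2*c) ..}"

text \<open>Full preimage in H of E_c under H -> Gamma\H: the Gamma-saturation of the strip set.\<close>
definition Ec_lift :: "real \<Rightarrow> complex set" where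
  "Ec_lift c = {z \<in> H. \<exists>g\<in>SL2Z. Im (moeb g z) \<in> Ic c}"

definition Fdom :: "complex set" where
  "Fdom = {z \<in> H. \<bar>Re z\<bar> \<le> 1/2 \<and> cmod z \<ge> 1}"

text \<open>Normalized hyperbolic measure on M, evaluated on a Gamma-invariant subset A of H
  (representing the subset of M it projects to) via the fundamental domain.\<close>
definition muM :: "complex set \<Rightarrow> ennreal" where
  "muM A = emeasure (density lborel (\<lambda>z. ennreal (3 / (pi * (Im z)^2)))) (A \<inter> Fdom)"

text \<open>Lift of R_n(x,y): the points x + j/n + iy, 0 <= j <= n-1.\<close>
definition Rn_lift :: "nat \<Rightarrow> real \<Rightarrow> real \<Rightarrow> complex set" where
  "Rn_lift n x y = {Complex (x + real j / real n) y | j. j < n}"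

end

theory Submission
  imports Defs
begin

lemma Complex_pair_measurable[measurable]:
  "(\<lambda>p::real\<times>real. Complex (fst p) (snd p)) \<in> borel_measurable borel"
  by (intro borel_measurable_continuous_onI continuous_intros) 

lemma lborel_complex:
  "(lborel::complex measure) = distr (lborel::(real\<times>real) measure) borel (\<lambda>p. Complex (fst p) (snd p))"
proof (rule lborel_eqI)
  fix l u :: complex
  assume le: "\<And>b. b \<in> Basis \<Longrightarrow> l \<bullet> b \<le> u \<bullet> b"
  have "Re l \<le> Re u" "Im l \<le> Im u" using le[of 1] le[of \<i>] by (auto simp: Basis_complex_def)
  have "(\<lambda>p. Complex (fst p) (snd p)) -` box l u \<inter> space (lborel::(real\<times>real) measure) = box (Re l) (Re u) \<times> box (Im l) (Im u)"
    by (auto simp: in_box_complex_iff)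
  then show "emeasure (distr (lborel::(real\<times>real) measure) borel (\<lambda>p. Complex (fst p) (snd p))) (box l u) = (\<Prod>b\<in>Basis. (u - l) \<bullet> b)"
  proof -
    have m: "(\<lambda>p. Complex (fst p) (snd p)) \<in> measurable (lborel::(real\<times>real) measure) borel" by simp
    show ?thesis using \<open>Re l \<le> Re u\<close> \<open>Im l \<le> Im u\<close> \<open>_ = box (Re l) (Re u) \<times> box (Im l) (Im u)\<close>
      by (subst emeasure_distr[OF m]) (simp_all add: lborel.emeasure_pair_measure_Times Basis_complex_def ennreal_mult lborel_prod[symmetric])
  qed
qed simp

definition dens :: "complex \<Rightarrow> ennreal" where "dens z = ennreal (3 / (pi * (Im z)^2))"

lemma dens_meas[measurable]: "dens \<in> borel_measurable borel"
  unfolding dens_def by measurable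

lemma nu_eq:
  assumes A[measurable]: "A \<in> sets borel"
  shows "emeasure (density lborel dens) A =
    (\<integral>\<^sup>+x. (\<integral>\<^sup>+y. ennreal (3/(pi*y^2)) * indicator A (Complex x y) \<partial>lborel) \<partial>lborel)"
proof -
  have "emeasure (density lborel dens) A = (\<integral>\<^sup>+z. dens z * indicator A z \<partial>lborel)"
    by (subst emeasure_density) auto
  also have "\<dots> = (\<integral>\<^sup>+p. dens (Complex (fst p) (snd p)) * indicator A (Complex (fst p) (snd p)) \<partial>(lborel::(real\<times>real) measure))"
    by (subst lborel_complex) (subst nn_integral_distr, auto)
  also have "\<dots> = (\<integral>\<^sup>+p. dens (Complex (fst p) (snd p)) * indicator A (Complex (fst p) (snd p)) \<partial>(lborel \<Otimes>\<^sub>M lborel))"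
    by (simp add: lborel_prod)
  also have "\<dots> = (\<integral>\<^sup>+x. (\<integral>\<^sup>+y. dens (Complex x y) * indicator A (Complex x y) \<partial>lborel) \<partial>lborel)"
  proof -
    define g where "g = (\<lambda>p::real\<times>real. dens (Complex (fst p) (snd p)) * indicator A (Complex (fst p) (snd p)))"
    have gm: "g \<in> borel_measurable (lborel \<Otimes>\<^sub>M lborel)" unfolding g_def lborel_prod by measurable
    have "(\<integral>\<^sup>+x. (\<integral>\<^sup>+y. g (x,y) \<partial>lborel) \<partial>lborel) = integral\<^sup>N (lborel \<Otimes>\<^sub>M lborel) g"
      by (rule lborel.nn_integral_fst[OF gm])
    then show ?thesis by (simp add: g_def)
  qed
  finally show ?thesis by (simp add: dens_def)
qed

lemma Fdom_eq: "Fdom = {z. 0 \<le> Im z} \<inter> {z. \<bar>Re z\<bar> \<le> 1/2} \<inter> {z. 1 \<le> cmod z}"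
proof -
  have "0 < Im z" if "\<bar>Re z\<bar> \<le> 1/2" "1 \<le> cmod z" "0 \<le> Im z" for z
  proof (rule ccontr)
    assume "\<not> 0 < Im z"
    then have "Im z = 0" using that by simp
    then have "cmod z = \<bar>Re z\<bar>" by (simp add: cmod_def)
    then show False using that by simp
  qed
  then show ?thesis unfolding Fdom_def H_def by auto
qed

lemma Fdom_closed: "closed Fdom"
  unfolding Fdom_eq
  by (intro closed_Int closed_Collect_le continuous_intros)

lemma Fdom_borel[measurable]: "Fdom \<in> sets borel"
  using Fdom_closed by (simp add: borel_closed)

lemma Fdom_pt: "indicator Fdom (Complex x y) = (indicator {-1/2..1/2} x * indicator {sqrt (1-x^2)..} y :: ennreal)"
proof -
  have "Complex x y \<in> Fdom \<longleftrightarrow> x \<in> {-1/2..1/2} \<and> y \<in> {sqrt (1-x^2)..}"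
  proof
    assume h: "Complex x y \<in> Fdom"
    then have y: "y > 0" "\<bar>x\<bar> \<le> 1/2" "1 \<le> sqrt (x^2+y^2)"
      by (auto simp: Fdom_def H_def cmod_def)
    then have "1 \<le> x^2+y^2" using real_le_rsqrt by fastforce
    then have "1 - x^2 \<le> y^2" by simp
    then have "sqrt (1-x^2) \<le> sqrt (y^2)" by (rule real_sqrt_le_mono)
    then have "sqrt (1-x^2) \<le> y" using y by simp
    then show "x \<in> {-1/2..1/2} \<and> y \<in> {sqrt (1-x^2)..}" using y by auto
  next
    assume h: "x \<in> {-1/2..1/2} \<and> y \<in> {sqrt (1-x^2)..}"
    then have x: "\<bar>x\<bar> \<le> 1/2" by auto
    have "x^2 \<le> 1/4" using abs_le_square_iff[of x "1/2"] x by (simp add: power_divide)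
    then have "0 < 1 - x^2" by simp
    then have s: "0 < sqrt (1-x^2)" by simp
    have ys: "sqrt (1-x^2) \<le> y" using h by auto
    then have "y > 0" using s by linarith
    have "(sqrt (1-x^2))^2 \<le> y^2" using ys s by (intro power_mono) auto
    then have "1 - x^2 \<le> y^2" using \<open>0 < 1 - x^2\<close> by simp
    then have "1 \<le> sqrt (x^2+y^2)" by simp
    then show "Complex x y \<in> Fdom" using x \<open>y > 0\<close> by (auto simp: Fdom_def H_def cmod_def)
  qed
  then show ?thesis by (auto simp: indicator_def)
qed

lemma inner_Fdom:
  assumes "\<bar>x\<bar> \<le> 1/2"
  shows "(\<integral>\<^sup>+y. ennreal (3/(pi*y^2)) * indicator {sqrt (1-x^2)..} y \<partial>lborel) = ennreal (3/pi * (1/sqrt (1-x^2)))"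
proof -
  have "x^2 \<le> 1/4" using abs_le_square_iff[of x "1/2"] assms by (simp add: power_divide)
  then have s: "0 < sqrt (1-x^2)" by simp
  have h: "((\<lambda>y. 1/y^2) has_integral 1/sqrt (1-x^2)) {sqrt (1-x^2)..}"
    using has_integral_inverse_power_to_inf[of 2 "sqrt (1-x^2)"] s by simp
  have I: "((\<lambda>y. 3/pi * (1 / y^2)) has_integral 3/pi * (1/sqrt (1-x^2))) {sqrt (1-x^2)..}"
    by (rule has_integral_mult_right[OF h])
  have nn: "\<And>y. y \<in> {sqrt (1-x^2)..} \<Longrightarrow> 0 \<le> 3/pi * (1 / y^2)" by simp
  have "(\<integral>\<^sup>+y. ennreal (3/pi * (1 / y^2)) * indicator {sqrt (1-x^2)..} y \<partial>lborel) = ennreal (3/pi * (1/sqrt (1-x^2)))"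
    by (rule nn_integral_has_integral_lebesgue'[OF nn I])
  then show ?thesis by simp
qed

lemma outer_Fdom:
  "(\<integral>\<^sup>+x. ennreal (3/pi * (1/sqrt (1-x^2))) * indicator {-1/2..1/2} x \<partial>lborel) = 1"
proof -
  have d: "((\<lambda>x. 3/pi * arcsin x) has_vector_derivative (3/pi * (1/sqrt (1-x^2)))) (at x within {-1/2..1/2})"
    if "x \<in> {-1/2..1/2}" for x
  proof -
    have "-1 < x" "x < 1" using that by auto
    then have "((\<lambda>x. 3/pi * arcsin x) has_real_derivative (3/pi * inverse (sqrt (1-x^2)))) (at x)"
      by (intro DERIV_cmult DERIV_arcsin)
    then have "((\<lambda>x. 3/pi * arcsin x) has_real_derivative (3/pi * (1/sqrt (1-x^2)))) (at x)"
      by (simp add: inverse_eq_divide)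
    then show ?thesis
      using has_real_derivative_iff_has_vector_derivative has_field_derivative_at_within by blast
  qed
  have "((\<lambda>x. 3/pi * (1/sqrt (1-x^2))) has_integral (3/pi * arcsin (1/2) - 3/pi * arcsin (-1/2))) {-1/2..1/2}"
    by (rule fundamental_theorem_of_calculus[OF _ d]) auto
  then have I: "((\<lambda>x. 3/pi * (1/sqrt (1-x^2))) has_integral 1) {-1/2..1/2}"
    by simp
  have nn: "0 \<le> 3/pi * (1/sqrt (1-x^2))" if "x \<in> {-1/2..1/2::real}" for x
  proof -
    have "\<bar>x\<bar> \<le> 1/2" using that by auto
    then have "x^2 \<le> 1/4" using abs_le_square_iff[of x "1/2"] by (simp add: power_divide)
    then show ?thesis by simp
  qed
  from nn_integral_has_integral_lebesgue'[OF nn I] show ?thesis by (metis ennreal_1)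
qed

lemma nu_Fdom: "emeasure (density lborel dens) Fdom = 1"
proof -
  have "emeasure (density lborel dens) Fdom =
    (\<integral>\<^sup>+x. (\<integral>\<^sup>+y. ennreal (3/(pi*y^2)) * indicator Fdom (Complex x y) \<partial>lborel) \<partial>lborel)"
    by (rule nu_eq) simp
  also have "\<dots> = (\<integral>\<^sup>+x. ennreal (3/pi * (1/sqrt (1-x^2))) * indicator {-1/2..1/2} x \<partial>lborel)"
  proof (rule nn_integral_cong)
    fix x :: real
    show "(\<integral>\<^sup>+y. ennreal (3/(pi*y^2)) * indicator Fdom (Complex x y) \<partial>lborel) =
      ennreal (3/pi * (1/sqrt (1-x^2))) * indicator {-1/2..1/2} x"
    proof (cases "x \<in> {-1/2..1/2}")
      case True
      then have ax: "\<bar>x\<bar> \<le> 1/2" by auto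
      have "(\<integral>\<^sup>+y. ennreal (3/(pi*y^2)) * indicator Fdom (Complex x y) \<partial>lborel) =
          (\<integral>\<^sup>+y. ennreal (3/(pi*y^2)) * indicator {sqrt (1-x^2)..} y \<partial>lborel)"
        using True by (simp add: Fdom_pt)
      also have "\<dots> = ennreal (3/pi * (1/sqrt (1-x^2)))" by (rule inner_Fdom[OF ax])
      finally show ?thesis using True by simp
    next
      case False
      then show ?thesis by (simp add: Fdom_pt)
    qed
  qed
  also have "\<dots> = 1" by (rule outer_Fdom)
  finally show ?thesis .
qed

lemma nu_strip:
  assumes "0 < a" "a \<le> b"
  shows "emeasure (density lborel dens) {z. \<bar>Re z\<bar> \<le> 1/2 \<and> a \<le> Im z \<and> Im z \<le> b} = ennreal (3/pi * (1/a - 1/b))"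
proof -
  let ?S = "{z. \<bar>Re z\<bar> \<le> 1/2 \<and> a \<le> Im z \<and> Im z \<le> b}"
  have cl: "closed ?S" by (intro closed_Collect_conj closed_Collect_le continuous_intros)
  then have [measurable]: "?S \<in> sets borel" by (simp add: borel_closed)
  have der: "((\<lambda>y. - (3/pi) / y) has_vector_derivative (3/pi * (1/y^2))) (at y within {a..b})" if "y \<in> {a..b}" for y
  proof -
    have "y > 0" using that assms by auto
    have "((\<lambda>y. - (3/pi) / y) has_real_derivative (3/pi * (1/y^2))) (at y)"
      using \<open>y > 0\<close> by (auto intro!: derivative_eq_intros simp: field_simps power2_eq_square)
    then show ?thesis
      using has_real_derivative_iff_has_vector_derivative has_field_derivative_at_within by blast
  qed
  have "((\<lambda>y. 3/pi * (1/y^2)) has_integral (- (3/pi) / b - - (3/pi) / a)) {a..b}"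
    by (rule fundamental_theorem_of_calculus[OF assms(2) der])
  moreover have eqv: "- (3/pi) / b - - (3/pi) / a = 3/pi * (1/a - 1/b)" by (simp add: field_simps)
  ultimately have I: "((\<lambda>y. 3/pi * (1/y^2)) has_integral (3/pi * (1/a - 1/b))) {a..b}"
    by (simp only: eqv)
  have nn: "\<And>y. y \<in> {a..b} \<Longrightarrow> 0 \<le> 3/pi * (1/y^2)" by simp
  have inner: "(\<integral>\<^sup>+y. ennreal (3/(pi*y^2)) * indicator {a..b} y \<partial>lborel) = ennreal (3/pi * (1/a - 1/b))"
    using nn_integral_has_integral_lebesgue'[OF nn I] by simp
  have "emeasure (density lborel dens) ?S =
    (\<integral>\<^sup>+x. (\<integral>\<^sup>+y. ennreal (3/(pi*y^2)) * indicator ?S (Complex x y) \<partial>lborel) \<partial>lborel)"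
    by (rule nu_eq) simp
  also have "\<dots> = (\<integral>\<^sup>+x. ennreal (3/pi * (1/a - 1/b)) * indicator {-1/2..1/2::real} x \<partial>lborel)"
  proof (rule nn_integral_cong)
    fix x :: real
    show "(\<integral>\<^sup>+y. ennreal (3/(pi*y^2)) * indicator ?S (Complex x y) \<partial>lborel) =
      ennreal (3/pi * (1/a - 1/b)) * indicator {-1/2..1/2} x"
    proof (cases "x \<in> {-1/2..1/2}")
      case True
      then have "(\<integral>\<^sup>+y. ennreal (3/(pi*y^2)) * indicator ?S (Complex x y) \<partial>lborel) =
          (\<integral>\<^sup>+y. ennreal (3/(pi*y^2)) * indicator {a..b} y \<partial>lborel)"
        by (intro nn_integral_cong) (auto simp: indicator_def)
      then show ?thesis using True inner by simp
    next
      case False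
      then show ?thesis by (auto simp: indicator_def)
    qed
  qed
  also have "\<dots> = ennreal (3/pi * (1/a - 1/b))"
    by (simp add: nn_integral_cmult_indicator)
  finally show ?thesis .
qed


lemma Im_moeb: "Im (moeb (a,b,c,d) z) = of_int (a*d - b*c) * Im z / (cmod (of_int c * z + of_int d))^2"
  unfolding moeb.simps Im_divide cmod_power2
  by (rule arg_cong2[where f="(/)"]) (simp_all add: algebra_simps)

definition fr :: "int \<times> int \<Rightarrow> complex \<Rightarrow> real" where
  "fr r z = Im z / (cmod (of_int (fst r) * z + of_int (snd r)))^2"

definition Rows :: "(int \<times> int) set" where
  "Rows = {(c,d). \<exists>a b. (a,b,c,d) \<in> SL2Z}"

lemma fr_eq: "fr (c,d) z = Im z / ((c * Re z + d)^2 + (c * Im z)^2)"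
  by (simp add: fr_def cmod_power2)

lemma Ec_lift_eq: "Ec_lift c0 = {z \<in> H. \<exists>r\<in>Rows. fr r z \<in> Ic c0}"
proof (intro set_eqI iffI)
  fix z assume "z \<in> Ec_lift c0"
  then obtain g where z: "z \<in> H" "g \<in> SL2Z" "Im (moeb g z) \<in> Ic c0" by (auto simp: Ec_lift_def)
  obtain a b c d where g: "g = (a,b,c,d)" by (metis prod_cases4)
  have "a*d - b*c = 1" using z g by (simp add: SL2Z_def)
  then have "Im (moeb g z) = fr (c,d) z" unfolding g Im_moeb fr_def by simp
  moreover have "(c,d) \<in> Rows" using z g by (auto simp: Rows_def)
  ultimately show "z \<in> {z \<in> H. \<exists>r\<in>Rows. fr r z \<in> Ic c0}" using z by auto
next
  fix z assume "z \<in> {z \<in> H. \<exists>r\<in>Rows. fr r z \<in> Ic c0}"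
  then obtain c d where z: "z \<in> H" "(c,d) \<in> Rows" "fr (c,d) z \<in> Ic c0" by auto
  then obtain a b where ab: "(a,b,c,d) \<in> SL2Z" by (auto simp: Rows_def)
  then have "a*d - b*c = 1" by (simp add: SL2Z_def)
  then have "Im (moeb (a,b,c,d) z) = fr (c,d) z" unfolding Im_moeb fr_def by simp
  then have "Im (moeb (a,b,c,d) z) \<in> Ic c0" using z(3) by (simp only:)
  then show "z \<in> Ec_lift c0" unfolding Ec_lift_def using z(1) ab by blast
qed

lemma Rows_nz: "(c,d) \<in> Rows \<Longrightarrow> c \<noteq> 0 \<or> d \<noteq> 0"
  by (auto simp: Rows_def SL2Z_def)

lemma Rows_c0: "(0,d) \<in> Rows \<Longrightarrow> d^2 = 1"
proof -
  assume "(0,d) \<in> Rows"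
  then obtain a where "a*d = 1" by (auto simp: Rows_def SL2Z_def)
  then have "d = 1 \<or> d = -1" using zmult_eq_1_iff by blast
  then show ?thesis by auto
qed

lemma Rows_nonvanish:
  assumes "(c,d) \<in> Rows" "z \<in> H"
  shows "of_int c * z + of_int d \<noteq> 0"
proof
  assume h: "of_int c * z + of_int d = 0"
  have "Im z > 0" using assms by (simp add: H_def)
  have "c * Im z = 0" using arg_cong[OF h, of Im] by simp
  then have "c = 0" using \<open>Im z > 0\<close> by simp
  then have "d = 0" using h by simp
  then show False using Rows_nz[OF assms(1)] \<open>c = 0\<close> by simp
qed

lemma fr_cont: "r \<in> Rows \<Longrightarrow> continuous_on H (fr r)"
  unfolding fr_def
  by (cases r) (auto intro!: continuous_intros dest: Rows_nonvanish)

lemma Ic_closed: "closed (Ic c0)"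
  unfolding Ic_def by (intro closed_Un closed_atLeastAtMost closed_atLeast)

lemma Ic_lb: "c0 > 0 \<Longrightarrow> t \<in> Ic c0 \<Longrightarrow> 1/(2*c0) \<le> t"
proof -
  assume c0: "c0 > 0" and t: "t \<in> Ic c0"
  have "1/(2*c0) \<le> 2/c0" "1/(2*c0) \<le> 9/(2*c0)" using c0 by (simp_all add: field_simps)
  then show ?thesis using t unfolding Ic_def by auto
qed

lemma int_abs_le_sq: "\<bar>c::int\<bar> \<le> c^2"
proof (cases "c = 0")
  case False
  then have "1 \<le> \<bar>c\<bar>" by simp
  then have "\<bar>c\<bar> * 1 \<le> \<bar>c\<bar> * \<bar>c\<bar>" by (intro mult_left_mono) auto
  then show ?thesis by (simp add: power2_eq_square abs_mult_self_eq)
qed simp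

lemma real_abs_le_sq: "\<bar>t::real\<bar> \<le> 1 + t^2"
proof (cases "\<bar>t\<bar> \<le> 1")
  case False
  then have "\<bar>t\<bar> * 1 \<le> \<bar>t\<bar> * \<bar>t\<bar>" by (intro mult_left_mono) auto
  then show ?thesis by (simp add: power2_eq_square abs_mult_self_eq)
qed (simp add: add_increasing2)

lemma locfin:
  assumes c0: "c0 > 0" and z: "z \<in> H"
  shows "\<exists>N::int. \<forall>w\<in>ball z (Im z/2). \<forall>c d. fr (c,d) w \<ge> 1/(2*c0) \<longrightarrow> \<bar>c\<bar> \<le> N \<and> \<bar>d\<bar> \<le> N"
proof -
  define y0 where "y0 = Im z"
  have y0: "y0 > 0" using z by (simp add: H_def y0_def)
  define M where "M = 4*c0/y0 + (1 + 3*c0*y0 + (4*c0/y0)*(\<bar>Re z\<bar> + y0))"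
  have M1: "4*c0/y0 \<ge> 0" using c0 y0 by simp
  show ?thesis
  proof (intro exI[of _ "\<lceil>M\<rceil>"] ballI allI impI)
    fix w c d assume w: "w \<in> ball z (Im z/2)" and f: "fr (c,d) w \<ge> 1/(2*c0)"
    have dzw: "cmod (z - w) < y0/2" using w by (simp add: dist_norm y0_def)
    have "\<bar>Im (z - w)\<bar> < y0/2" "\<bar>Re (z - w)\<bar> < y0/2"
      using dzw abs_Im_le_cmod abs_Re_le_cmod by (blast intro: le_less_trans)+
    then have A': "\<bar>Im z - Im w\<bar> < y0/2" "\<bar>Re z - Re w\<bar> < y0/2" by simp_all
    have yw1: "Im w > y0/2" using A'(1) unfolding y0_def abs_less_iff by linarith
    have yw2: "Im w < 3*y0/2" using A'(1) unfolding y0_def abs_less_iff by linarith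
    note yw = yw1 yw2
    have rw: "\<bar>Re w\<bar> \<le> \<bar>Re z\<bar> + y0"
      using A'(2) y0 abs_ge_self[of "Re z"] abs_ge_minus_self[of "Re z"] unfolding abs_less_iff abs_le_iff by linarith
    define Q where "Q = (c * Re w + d)^2 + (c * Im w)^2"
    have fq: "fr (c,d) w = Im w / Q" by (simp add: fr_eq Q_def)
    have Qpos: "Q > 0"
    proof (rule ccontr)
      assume "\<not> Q > 0"
      then have "Q = 0" unfolding Q_def by (smt (verit) zero_le_power2)
      then have "fr (c,d) w = 0" using fq by simp
      then show False using f c0 by simp
    qed
    have "1/(2*c0) \<le> Im w / Q" using f fq by simp
    then have Qle: "Q \<le> 2*c0*Im w" using Qpos c0 by (simp add: field_simps)
    have "(c * Im w)^2 \<le> 2*c0*Im w" using Qle unfolding Q_def by (smt (verit) zero_le_power2)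
    then have "(c^2 * Im w) * Im w \<le> (2*c0) * Im w" by (simp add: power2_eq_square algebra_simps)
    then have "c^2 * Im w \<le> 2*c0" using yw y0 by (meson mult_right_le_imp_le less_trans half_gt_zero)
    moreover have "c^2 * (y0/2) \<le> c^2 * Im w" using yw by (intro mult_left_mono) auto
    ultimately have "c^2 * y0 \<le> 4*c0" by simp
    then have cb: "real_of_int (c^2) \<le> 4*c0/y0" using y0 by (simp add: field_simps)
    have cabs: "real_of_int \<bar>c\<bar> \<le> 4*c0/y0" using int_abs_le_sq[of c] cb by linarith
    have "(c * Re w + d)^2 \<le> 2*c0*Im w" using Qle unfolding Q_def by (smt (verit) zero_le_power2)
    also have "\<dots> \<le> 3*c0*y0" using yw c0 by simp
    finally have "\<bar>c * Re w + d\<bar> \<le> 1 + 3*c0*y0" using real_abs_le_sq[of "c * Re w + d"] by linarith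
    moreover have "\<bar>c * Re w\<bar> \<le> (4*c0/y0) * (\<bar>Re z\<bar> + y0)"
      unfolding abs_mult using cabs rw by (intro mult_mono) auto
    ultimately have "\<bar>real_of_int d\<bar> \<le> 1 + 3*c0*y0 + (4*c0/y0) * (\<bar>Re z\<bar> + y0)" by linarith
    then have "real_of_int \<bar>d\<bar> \<le> M" using M1 unfolding M_def by simp
    moreover have "real_of_int \<bar>c\<bar> \<le> M" using cabs M1 y0 c0 unfolding M_def
      by (smt (verit) mult_nonneg_nonneg abs_ge_zero)
    ultimately show "\<bar>c\<bar> \<le> \<lceil>M\<rceil> \<and> \<bar>d\<bar> \<le> \<lceil>M\<rceil>" by (simp add: le_ceiling_iff)
  qed
qed

lemma closedin_local:
  assumes "S \<subseteq> U"
    and "\<And>z. z \<in> U \<Longrightarrow> \<exists>r>0. \<exists>V. closedin (top_of_set U) V \<and> S \<inter> ball z r = V \<inter> ball z r"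
  shows "closedin (top_of_set U) S"
proof -
  have "openin (top_of_set U) (U - S)"
    unfolding openin_euclidean_subtopology_iff
  proof (intro conjI ballI)
    show "U - S \<subseteq> U" by auto
    fix z assume z: "z \<in> U - S"
    obtain r V where r: "r>0" "closedin (top_of_set U) V" "S \<inter> ball z r = V \<inter> ball z r"
      using assms(2) z by blast
    have "z \<notin> V" using z r(1,3) by (metis DiffD2 IntD1 IntI centre_in_ball)
    then have "z \<in> U - V" using z by auto
    moreover have "openin (top_of_set U) (U - V)" using r(2) by (simp add: closedin_def)
    ultimately obtain e where e: "e>0" "\<forall>x'\<in>U. dist x' z < e \<longrightarrow> x' \<in> U - V"
      unfolding openin_euclidean_subtopology_iff by blast
    show "\<exists>e>0. \<forall>x'\<in>U. dist x' z < e \<longrightarrow> x' \<in> U - S"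
    proof (intro exI[of _ "min e r"] conjI ballI impI)
      show "min e r > 0" using e r by simp
      fix x' assume "x' \<in> U" "dist x' z < min e r"
      then have "x' \<in> U - V" "x' \<in> ball z r" using e by (auto simp: dist_commute)
      then show "x' \<in> U - S" using r(3) by blast
    qed
  qed
  then show ?thesis using assms(1) by (simp add: closedin_def)
qed

lemma Ec_closedin:
  assumes c0: "c0 > 0"
  shows "closedin (top_of_set H) (Ec_lift c0)"
proof (rule closedin_local)
  show "Ec_lift c0 \<subseteq> H" by (auto simp: Ec_lift_def)
  fix z assume z: "z \<in> H"
  obtain N where N: "\<forall>w\<in>ball z (Im z/2). \<forall>c d. fr (c,d) w \<ge> 1/(2*c0) \<longrightarrow> \<bar>c\<bar> \<le> N \<and> \<bar>d\<bar> \<le> N"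
    using locfin[OF c0 z] by blast
  define F where "F = Rows \<inter> ({-N..N} \<times> {-N..N})"
  define V where "V = (\<Union>r\<in>F. H \<inter> fr r -` Ic c0)"
  have "closedin (top_of_set H) V"
    unfolding V_def
  proof (rule closedin_Union)
    show "finite ((\<lambda>r. H \<inter> fr r -` Ic c0) ` F)" unfolding F_def by auto
    fix T assume "T \<in> (\<lambda>r. H \<inter> fr r -` Ic c0) ` F"
    then obtain r where "r \<in> F" "T = H \<inter> fr r -` Ic c0" by auto
    then show "closedin (top_of_set H) T"
      using continuous_closedin_preimage[OF fr_cont Ic_closed] by (auto simp: F_def)
  qed
  moreover have "Ec_lift c0 \<inter> ball z (Im z/2) = V \<inter> ball z (Im z/2)"
  proof (intro set_eqI iffI)
    fix w assume w: "w \<in> Ec_lift c0 \<inter> ball z (Im z/2)"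
    then obtain c d where cd: "w \<in> H" "(c,d) \<in> Rows" "fr (c,d) w \<in> Ic c0"
      by (auto simp: Ec_lift_eq)
    then have "fr (c,d) w \<ge> 1/(2*c0)" using Ic_lb[OF c0] by blast
    then have "\<bar>c\<bar> \<le> N \<and> \<bar>d\<bar> \<le> N" using N w by blast
    then have "(c,d) \<in> F" using cd by (auto simp: F_def)
    then show "w \<in> V \<inter> ball z (Im z/2)" using cd w by (auto simp: V_def)
  next
    fix w assume "w \<in> V \<inter> ball z (Im z/2)"
    then show "w \<in> Ec_lift c0 \<inter> ball z (Im z/2)" by (auto simp: V_def F_def Ec_lift_eq)
  qed
  moreover have "Im z/2 > 0" using z by (simp add: H_def)
  ultimately show "\<exists>r>0. \<exists>V. closedin (top_of_set H) V \<and> Ec_lift c0 \<inter> ball z r = V \<inter> ball z r"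
    by blast
qed

lemma strip_disjoint:
  assumes c0: "c0 > 0" "c0 < 3/2" and y: "Im z > 4/c0" "Im z > 2*c0" "Im z < 9/(2*c0)"
  shows "z \<notin> Ec_lift c0"
proof
  assume "z \<in> Ec_lift c0"
  then obtain c d where cd: "(c,d) \<in> Rows" "fr (c,d) z \<in> Ic c0" by (auto simp: Ec_lift_eq)
  define y where "y = Im z"
  have ypos: "y > 0" using y c0 y_def by (smt (verit) divide_pos_pos)
  show False
  proof (cases "c = 0")
    case True
    then have "d^2 = 1" using cd Rows_c0 by blast
    then have "real_of_int d ^2 = 1" by (metis of_int_1 of_int_power)
    then have "fr (c,d) z = y" using True by (simp add: fr_eq y_def)
    moreover have "1/c0 < 4/c0" using c0 by (simp add: field_simps)
    ultimately show False using cd(2) y unfolding Ic_def y_def by auto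
  next
    case False
    then have "(1::int) \<le> c^2" using int_abs_le_sq[of c] by (smt (verit))
    then have "real_of_int c ^2 \<ge> 1" by (metis of_int_1_le_iff of_int_power)
    then have "(c*y)^2 \<ge> y^2" by (simp add: power_mult_distrib mult_le_cancel_right1 ypos)
    then have Qge: "(c * Re z + d)^2 + (c * y)^2 \<ge> y^2" by (smt (verit) zero_le_power2)
    have freq: "fr (c,d) z = y / ((c * Re z + d)^2 + (c * y)^2)" by (simp add: fr_eq y_def)
    have "y^2 > 0" using ypos by simp
    then have Qpos: "0 < (c * Re z + d)^2 + (c * y)^2" using Qge by linarith
    have "y / ((c * Re z + d)^2 + (c * y)^2) \<le> y / y^2" using Qge ypos Qpos by (intro divide_left_mono) auto
    then have "fr (c,d) z \<le> y / y^2" using freq by simp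
    also have "\<dots> = 1/y" by (simp add: power2_eq_square)
    also have "\<dots> < 1/(2*c0)" using y c0 by (simp add: y_def field_simps)
    finally show False using Ic_lb[OF c0(1) cd(2)] by simp
  qed
qed


lemma quad_contra:
  fixes B D :: real
  assumes "B > 0" "D > 0" "sqrt 5 * B * D > B^2 + D^2" "sqrt 5 * B * (B+D) > B^2 + (B+D)^2"
  shows False
proof -
  define s where "s = sqrt 5"
  have s2: "s^2 = 5" "s > 0" by (simp_all add: s_def)
  have e1: "(2*D - (s-1)*B) * (2*D - (s+1)*B) < 0"
    using assms(3) s2 unfolding s_def[symmetric] by (simp add: algebra_simps power2_eq_square)
  have e2: "(2*(B+D) - (s-1)*B) * (2*(B+D) - (s+1)*B) < 0"
    using assms(4) s2 unfolding s_def[symmetric] by (simp add: algebra_simps power2_eq_square)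
  have "2*D > (s-1)*B"
  proof (rule ccontr)
    assume "\<not> ?thesis"
    moreover have "(s+1)*B = (s-1)*B + 2*B" by (simp add: algebra_simps)
    ultimately have "2*D - (s-1)*B \<le> 0" "2*D - (s+1)*B \<le> 0" using assms(1) by auto
    then have "0 \<le> (2*D - (s-1)*B) * (2*D - (s+1)*B)" by (simp add: zero_le_mult_iff)
    then show False using e1 by simp
  qed
  moreover have "2*(B+D) < (s+1)*B"
  proof (rule ccontr)
    assume "\<not> ?thesis"
    moreover have "(s+1)*B = (s-1)*B + 2*B" by (simp add: algebra_simps)
    ultimately have "2*(B+D) - (s-1)*B \<ge> 0" "2*(B+D) - (s+1)*B \<ge> 0" using assms(1) by auto
    then have "0 \<le> (2*(B+D) - (s-1)*B) * (2*(B+D) - (s+1)*B)" by (simp add: zero_le_mult_iff)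
    then show False using e2 by simp
  qed
  ultimately show False by (simp add: algebra_simps)
qed

lemma hurwitz_step:
  fixes a b c d :: int and x :: real
  assumes b: "b > 0" and d: "d > 0" and det: "b*c - a*d = 1"
    and l: "a/b < x" and r: "x < c/d" and m: "x \<noteq> (a+c)/(b+d)"
  shows "\<exists>p q. (p,q) \<in> {(a,b),(c,d),(a+c,b+d)} \<and> \<bar>x - p/q\<bar> \<le> 1/(sqrt 5 * (real_of_int q)^2)"
proof (rule ccontr)
  assume "\<not> ?thesis"
  then have nq: "\<And>p q. (p,q) \<in> {(a,b),(c,d),(a+c,b+d)} \<Longrightarrow> \<bar>x - p/q\<bar> > 1/(sqrt 5 * (real_of_int q)^2)"
    by (meson not_le)
  have h1: "\<bar>x - a/b\<bar> > 1/(sqrt 5 * (real_of_int b)^2)" using nq[of a b] by simp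
  have h2: "\<bar>x - c/d\<bar> > 1/(sqrt 5 * (real_of_int d)^2)" using nq[of c d] by simp
  have h3: "\<bar>x - (a+c)/(b+d)\<bar> > 1/(sqrt 5 * (real_of_int (b+d))^2)" using nq[of "a+c" "b+d"] by simp
  define B where "B = real_of_int b"
  define D where "D = real_of_int d"
  define A where "A = real_of_int a"
  define C where "C = real_of_int c"
  have B: "B > 0" and D: "D > 0" using b d by (simp_all add: B_def D_def)
  have det': "B*C - A*D = 1" using arg_cong[OF det, of real_of_int] unfolding A_def B_def C_def D_def by simp
  have s: "sqrt 5 > 0" by simp
  have key: "sqrt 5 * U * V > U^2 + V^2" if "U > 0" "V > 0" "1/(U*V) > 1/(sqrt 5 * U^2) + 1/(sqrt 5 * V^2)" for U V :: real
  proof -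
    define K where "K = sqrt 5 * U^2 * V^2"
    have Kpos: "K > 0" using that s by (simp add: K_def)
    have e1: "1/(sqrt 5 * U^2) + 1/(sqrt 5 * V^2) = (U^2 + V^2) / K"
      unfolding K_def using that s by (simp add: field_simps power2_eq_square)
    have e2: "1/(U*V) = (sqrt 5 * U * V) / K"
      unfolding K_def using that s by (simp add: field_simps power2_eq_square)
    have "(U^2 + V^2) / K < (sqrt 5 * U * V) / K" using that(3) unfolding e1 e2 .
    then show ?thesis using divide_less_cancel[of "U^2 + V^2" K "sqrt 5 * U * V"] Kpos by blast
  qed
  have cd_ab: "C/D - A/B = 1/(B*D)" using B D det' by (simp add: field_simps)
  have m_ab: "(A+C)/(B+D) - A/B = 1/(B*(B+D))" using B D det' by (simp add: field_simps)
  have cd_m: "C/D - (A+C)/(B+D) = 1/(D*(B+D))" using B D det' by (simp add: field_simps)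
  have l': "A/B < x" and r': "x < C/D" and m': "x \<noteq> (A+C)/(B+D)"
    using l r m by (simp_all add: A_def B_def C_def D_def)
  have h1': "x - A/B > 1/(sqrt 5 * B^2)" using h1 l' by (simp add: A_def B_def)
  have h2': "C/D - x > 1/(sqrt 5 * D^2)" using h2 r' by (simp add: C_def D_def)
  have h3': "\<bar>x - (A+C)/(B+D)\<bar> > 1/(sqrt 5 * (B+D)^2)" using h3 by (simp add: A_def B_def C_def D_def)
  have k1: "sqrt 5 * B * D > B^2 + D^2"
    using key[OF B D] h1' h2' cd_ab by linarith
  show False
  proof (cases "x < (A+C)/(B+D)")
    case True
    then have "(A+C)/(B+D) - x > 1/(sqrt 5 * (B+D)^2)" using h3' by simp
    then have "sqrt 5 * B * (B+D) > B^2 + (B+D)^2"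
      using key[of B "B+D"] B D h1' m_ab by linarith
    then show False using quad_contra[OF B D k1] by simp
  next
    case False
    then have "x - (A+C)/(B+D) > 1/(sqrt 5 * (B+D)^2)" using h3' m' by simp
    then have "sqrt 5 * D * (D+B) > D^2 + (D+B)^2"
      using key[of D "B+D"] B D h2' cd_m by (simp add: add.commute)
    moreover have "sqrt 5 * D * B > D^2 + B^2" using k1 by (simp add: algebra_simps)
    ultimately show False using quad_contra[OF D B] by simp
  qed
qed

fun sb :: "real \<Rightarrow> nat \<Rightarrow> int \<times> int \<times> int \<times> int" where
  "sb x 0 = (\<lfloor>x\<rfloor>, 1, \<lfloor>x\<rfloor> + 1, 1)"
| "sb x (Suc k) = (case sb x k of (a,b,c,d) \<Rightarrow>
      if x < (a+c)/(b+d) then (a,b,a+c,b+d) else (a+c,b+d,c,d))"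

lemma rat_frac_ne: "x \<notin> \<rat> \<Longrightarrow> x \<noteq> real_of_int p / real_of_int q"
  by (metis Rats_divide Rats_of_int)

lemma sb_inv:
  assumes "x \<notin> \<rat>"
  shows "sb x k = (a,b,c,d) \<Longrightarrow> b > 0 \<and> d > 0 \<and> b*c - a*d = 1 \<and> a/b < x \<and> x < c/d \<and> b + d \<ge> int k + 2"
proof (induction k arbitrary: a b c d)
  case 0
  have "\<lfloor>x\<rfloor> \<noteq> x" using assms by (metis Rats_of_int)
  then have "\<lfloor>x\<rfloor> < x" by (simp add: order.not_eq_order_implies_strict)
  then show ?case using 0 by auto
next
  case (Suc k)
  obtain a0 b0 c0 d0 where e: "sb x k = (a0,b0,c0,d0)" by (metis prod_cases4)
  note IH = Suc.IH[OF e]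
  have ne: "x \<noteq> (a0+c0)/(b0+d0)" using rat_frac_ne[OF assms, of "a0+c0" "b0+d0"] by simp
  have bd: "real_of_int b0 > 0" "real_of_int d0 > 0" using IH by auto
  have med1: "(a0+c0)/(b0+d0) > a0/b0" and med2: "(a0+c0)/(b0+d0) < c0/d0"
  proof -
    have "b0 * c0 - a0 * d0 = 1" using IH by simp
    from arg_cong[OF this, of real_of_int] have "real_of_int b0 * c0 - a0 * d0 = 1" by simp
    then show "(a0+c0)/(b0+d0) > a0/b0" "(a0+c0)/(b0+d0) < c0/d0"
      using bd by (simp_all add: field_simps)
  qed
  show ?case
  proof (cases "x < (a0+c0)/(b0+d0)")
    case True
    then have "a = a0" "b = b0" "c = a0+c0" "d = b0+d0" using Suc.prems e by auto
    then show ?thesis using IH True by (auto simp: algebra_simps)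
  next
    case False
    then have "a = a0+c0" "b = b0+d0" "c = c0" "d = d0" using Suc.prems e by auto
    then show ?thesis using IH False ne by (auto simp: algebra_simps)
  qed
qed


lemma sb_close:
  assumes "x \<notin> \<rat>" "sb x k = (a,b,c,d)"
  shows "\<exists>(p::int) (q::int). q > 0 \<and> \<bar>x - p/q\<bar> \<le> 1/(sqrt 5 * (real_of_int q)^2) \<and> \<bar>x - p/q\<bar> < 1/(real k + 1)"
proof -
  note I = sb_inv[OF assms]
  define A where "A = real_of_int a"
  define B where "B = real_of_int b"
  define C where "C = real_of_int c"
  define D where "D = real_of_int d"
  have B: "B > 0" and D: "D > 0" using I by (simp_all add: B_def D_def)
  have det': "B*C - A*D = 1" proof -
    have "b*c - a*d = 1" using I by simp
    from arg_cong[OF this, of real_of_int] show ?thesis unfolding A_def B_def C_def D_def by simp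
  qed
  have ne: "x \<noteq> (a+c)/(b+d)" using rat_frac_ne[OF assms(1), of "a+c" "b+d"] by simp
  obtain p q where pq: "(p,q) \<in> {(a,b),(c,d),(a+c,b+d)}" "\<bar>x - p/q\<bar> \<le> 1/(sqrt 5 * (real_of_int q)^2)"
    using hurwitz_step[of b d c a x] I ne by auto
  have med1: "(A+C)/(B+D) \<ge> A/B" and med2: "(A+C)/(B+D) \<le> C/D"
    using B D det' by (simp_all add: field_simps)
  have lr: "A/B < x" "x < C/D" using I by (simp_all add: A_def B_def C_def D_def)
  have pin: "A/B \<le> p/q \<and> p/q \<le> C/D"
    using pq(1) med1 med2 lr by (auto simp: A_def B_def C_def D_def)
  have "\<bar>x - p/q\<bar> < C/D - A/B" using pin lr by linarith
  also have "C/D - A/B = 1/(B*D)" using B D det' by (simp add: field_simps)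
  also have "1/(B*D) \<le> 1/(real k + 1)"
  proof -
    have b1: "b - 1 \<ge> 0" "d - 1 \<ge> 0" using I by auto
    then have "(b-1)*(d-1) \<ge> 0" by simp
    moreover have "(b-1)*(d-1) = b*d - b - d + 1" by (simp add: algebra_simps)
    ultimately have "b*d \<ge> int k + 1" using I by linarith
    then have "real_of_int (b*d) \<ge> real_of_int (int k + 1)" by (simp only: of_int_le_iff)
    then have "B*D \<ge> real k + 1" unfolding B_def D_def by simp
    then show ?thesis by (intro divide_left_mono) auto
  qed
  finally have "\<bar>x - p/q\<bar> < 1/(real k + 1)" .
  moreover have "q > 0" using pq(1) I by auto
  ultimately show ?thesis using pq(2) by blast
qed

lemma frac_dist:
  fixes t :: real and p :: int
  shows "min (frac t) (1 - frac t) \<le> \<bar>t - p\<bar>"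
proof (cases "p \<le> \<lfloor>t\<rfloor>")
  case True
  then have "real_of_int p \<le> real_of_int \<lfloor>t\<rfloor>" by simp
  moreover have "t - p \<le> \<bar>t - p\<bar>" by simp
  ultimately have "frac t \<le> \<bar>t - p\<bar>" unfolding frac_def by linarith
  then show ?thesis by (simp add: min_le_iff_disj)
next
  case False
  then have "p \<ge> \<lfloor>t\<rfloor> + 1" by simp
  then have "real_of_int p \<ge> real_of_int \<lfloor>t\<rfloor> + 1" by (metis of_int_le_iff of_int_add of_int_1)
  moreover have "p - t \<le> \<bar>t - p\<bar>" by simp
  ultimately have "1 - frac t \<le> \<bar>t - p\<bar>" unfolding frac_def by linarith
  then show ?thesis by (simp add: min_le_iff_disj)
qed

lemma infinite_good:
  assumes x: "x \<notin> \<rat>"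
  shows "\<exists>n\<ge>m. n > 0 \<and> (\<exists>p::int. \<bar>x - p/real n\<bar> \<le> 1/(sqrt 5 * (real n)^2))"
proof -
  define Q where "Q = max m 1"
  define h where "h q = min (frac (real q * x)) (1 - frac (real q * x))" for q :: nat
  have hpos: "h q > 0" if "q \<ge> 1" for q
  proof -
    have "real q * x \<notin> \<int>"
    proof
      assume "real q * x \<in> \<int>"
      then have "real q * x \<in> \<rat>" using Ints_subset_Rats by blast
      then have "(real q * x) / real q \<in> \<rat>" by (intro Rats_divide) auto
      moreover have "(real q * x) / real q = x" using that by simp
      ultimately show False using x by simp
    qed
    then have "frac (real q * x) \<noteq> 0" by simp
    then have "frac (real q * x) > 0" using frac_ge_0 by (metis less_eq_real_def)
    then show ?thesis using frac_lt_1 by (simp add: h_def)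
  qed
  define \<eta> where "\<eta> = Min (h ` {1..Q})"
  have eta_pos: "\<eta> > 0" unfolding \<eta>_def using hpos Q_def by (subst Min_gr_iff) auto
  have eta_le: "\<eta> \<le> h q" if "q \<in> {1..Q}" for q unfolding \<eta>_def using that by simp
  obtain k :: nat where k: "real Q / \<eta> < real k" using reals_Archimedean2 by blast
  then have kQ: "real Q < \<eta> * (real k + 1)" using eta_pos by (simp add: field_simps)
  obtain a b c d where e: "sb x k = (a,b,c,d)" by (metis prod_cases4)
  obtain p q :: int where pq: "q > 0" "\<bar>x - p/q\<bar> \<le> 1/(sqrt 5 * (real_of_int q)^2)" "\<bar>x - p/q\<bar> < 1/(real k + 1)"
    using sb_close[OF x e] by blast
  have qQ: "nat q > Q"
  proof (rule ccontr)
    assume "\<not> nat q > Q"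
    then have qin: "nat q \<in> {1..Q}" using pq(1) by auto
    have rq: "real (nat q) = real_of_int q" using pq(1) by simp
    have "\<eta> \<le> h (nat q)" using eta_le[OF qin] .
    also have "\<dots> \<le> \<bar>real (nat q) * x - p\<bar>" unfolding h_def by (rule frac_dist)
    also have "\<bar>real (nat q) * x - p\<bar> = real_of_int q * \<bar>x - p/q\<bar>"
    proof -
      have "real_of_int q * (x - p/q) = real (nat q) * x - p" using pq(1) rq by (simp add: field_simps)
      then have "\<bar>real (nat q) * x - p\<bar> = \<bar>real_of_int q\<bar> * \<bar>x - p/q\<bar>" by (metis abs_mult)
      then show ?thesis using pq(1) by simp
    qed
    also have "\<dots> \<le> real_of_int q * (1/(real k + 1))" using pq(3) pq(1) by (intro mult_left_mono) auto
    also have "\<dots> \<le> real Q * (1/(real k + 1))" using qin rq by (intro mult_right_mono) auto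
    also have "\<dots> < \<eta>" using kQ by (simp add: field_simps)
    finally show False by simp
  qed
  show ?thesis
  proof (intro exI[of _ "nat q"] conjI exI[of _ p])
    show "nat q \<ge> m" using qQ Q_def by simp
    show "nat q > 0" using pq(1) by simp
    show "\<bar>x - p/real (nat q)\<bar> \<le> 1/(sqrt 5 * (real (nat q))^2)" using pq(1,2) by simp
  qed
qed

lemma good_n:
  fixes p :: int and n :: nat and x c0 :: real
  assumes c0: "1/sqrt 5 \<le> c0" and n: "n > 0" and p: "\<bar>x - p/real n\<bar> \<le> 1/(sqrt 5 * (real n)^2)"
  shows "Rn_lift n x (c0/(real n)^2) \<subseteq> Ec_lift c0"
proof
  fix z assume "z \<in> Rn_lift n x (c0/(real n)^2)"
  then obtain j where j: "j < n" and z: "z = Complex (x + real j / real n) (c0/(real n)^2)"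
    by (auto simp: Rn_lift_def)
  have "1/sqrt 5 > 0" by simp
  then have c0pos: "c0 > 0" using c0 by linarith
  define X where "X = real n"
  have X: "X > 0" using n by (simp add: X_def)
  have zH: "z \<in> H" using z c0pos X by (simp add: H_def X_def)
  define G where "G = gcd (int n) (p + int j)"
  have G: "G > 0" using n by (simp add: G_def)
  define Cc where "Cc = int n div G"
  define Dd where "Dd = - ((p + int j) div G)"
  have "coprime (int n div G) ((p + int j) div G)" unfolding G_def by (rule div_gcd_coprime) (use n in simp)
  then have "gcd Cc Dd = 1" by (simp add: Cc_def Dd_def coprime_iff_gcd_eq_1)
  then obtain uu vv where uv: "uu*Cc + vv*Dd = 1" using bezout_int[of Cc Dd] by auto
  have SL: "(vv, -uu, Cc, Dd) \<in> SL2Z" using uv by (simp add: SL2Z_def algebra_simps)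
  define Gr where "Gr = real_of_int G"
  have Gr: "Gr > 0" using G by (simp add: Gr_def)
  have Cr: "real_of_int Cc = X / Gr" unfolding Cc_def X_def Gr_def G_def by (simp add: real_of_int_div)
  have Dr: "real_of_int Dd = - ((real_of_int p + real j) / Gr)" unfolding Dd_def Gr_def G_def
    by (subst of_int_minus, subst real_of_int_div) auto
  define \<epsilon> where "\<epsilon> = X * (X * x - p)"
  have "X^2 * (x - p/X) = \<epsilon>" using X by (simp add: \<epsilon>_def field_simps power2_eq_square)
  then have "\<bar>\<epsilon>\<bar> = \<bar>X^2\<bar> * \<bar>x - p/X\<bar>" by (metis abs_mult)
  then have "\<bar>\<epsilon>\<bar> = X^2 * \<bar>x - p/X\<bar>" by simp
  also have "\<dots> \<le> X^2 * (1/(sqrt 5 * X^2))" using p X by (intro mult_left_mono) (auto simp: X_def)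
  also have "\<dots> = 1/sqrt 5" using X by simp
  finally have epsb: "\<bar>\<epsilon>\<bar> \<le> c0" using c0 by linarith
  then have eps2: "\<epsilon>^2 \<le> c0^2" using abs_le_square_iff[of \<epsilon> c0] c0pos by simp
  define w where "w = c0 / (\<epsilon>^2 + c0^2)"
  have den: "\<epsilon>^2 + c0^2 > 0" using c0pos by (simp add: add_nonneg_pos)
  have w1: "w \<ge> 1/(2*c0)" using den c0pos eps2 by (simp add: w_def field_simps power2_eq_square)
  have w2: "w \<le> 1/c0" using den c0pos by (simp add: w_def field_simps power2_eq_square)
  have im: "Im (moeb (vv, -uu, Cc, Dd) z) = Im z / ((Cc * Re z + Dd)^2 + (Cc * Im z)^2)"
  proof -
    have det1: "vv*Dd - (-uu)*Cc = 1" using uv by (simp add: algebra_simps)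
    show ?thesis unfolding Im_moeb det1 cmod_power2 by simp
  qed
  have re1: "Cc * Re z + Dd = (X*x - p)/Gr" using X Gr by (simp add: z Cr Dr X_def field_simps)
  have im1: "Cc * Im z = c0/(Gr*X)" using X Gr by (simp add: z Cr X_def field_simps power2_eq_square)
  have val: "Im (moeb (vv, -uu, Cc, Dd) z) = Gr^2 * w"
    unfolding im re1 im1 using X Gr den c0pos
    by (simp add: z w_def \<epsilon>_def X_def[symmetric] field_simps power2_eq_square)
  have "Gr^2 * w \<in> Ic c0"
  proof -
    consider "G = 1" | "G = 2" | "G \<ge> 3" using G by linarith
    then show ?thesis
    proof cases
      case 1
      then show ?thesis using w1 w2 by (simp add: Gr_def Ic_def)
    next
      case 2
      then have g4: "Gr^2 = 4" by (simp add: Gr_def)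
      have "4*w \<ge> 2/c0" "4*w \<le> 4/c0" using w1 w2 c0pos by (simp_all add: field_simps)
      then have "Gr^2 * w \<in> {2/c0..4/c0}" unfolding g4 by simp
      then show ?thesis unfolding Ic_def by blast
    next
      case 3
      then have "Gr \<ge> 3" by (simp add: Gr_def)
      then have "Gr^2 \<ge> 3^2" by (intro power_mono) auto
      then have "Gr^2 \<ge> 9" by simp
      have wpos: "w > 0" using den c0pos by (simp add: w_def)
      have "Gr^2 * w \<ge> 9 * w" using \<open>Gr^2 \<ge> 9\<close> wpos by (intro mult_right_mono) auto
      moreover have "9 * w \<ge> 9/(2*c0)" using w1 by (simp add: field_simps)
      ultimately show ?thesis by (simp add: Ic_def)
    qed
  qed
  then have "Im (moeb (vv, -uu, Cc, Dd) z) \<in> Ic c0" using val by (simp only:)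
  then show "z \<in> Ec_lift c0" unfolding Ec_lift_def using zH SL by blast
qed
theorem theorem4p5:
  fixes c :: real
  assumes "1 / sqrt 5 \<le> c" and "c < 3/2"
  shows "closedin (top_of_set H) (Ec_lift c)
       \<and> Ec_lift c \<inter> Fdom \<in> sets lborel
       \<and> muM (Ec_lift c) < 1
       \<and> (\<forall>x::real. 0 \<le> x \<and> x < 1 \<and> x \<notin> \<rat> \<longrightarrow>
            infinite {n::nat. n > 0 \<and> Rn_lift n x (c / (real n)^2) \<subseteq> Ec_lift c})"
proof -
  have "1/sqrt 5 > 0" by simp
  then have c0: "c > 0" using assms(1) by linarith
  have cl: "closedin (top_of_set H) (Ec_lift c)" by (rule Ec_closedin[OF c0])
  then obtain T where T: "closed T" "Ec_lift c = H \<inter> T" by (auto simp: closedin_closed)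
  have FH: "Fdom \<subseteq> H" by (auto simp: Fdom_def)
  have "Ec_lift c \<inter> Fdom = T \<inter> Fdom" using T FH by auto
  then have clF: "closed (Ec_lift c \<inter> Fdom)" using T(1) Fdom_closed by (simp add: closed_Int)
  then have bor: "Ec_lift c \<inter> Fdom \<in> sets borel" by (simp add: borel_closed)
  have meas: "muM (Ec_lift c) < 1"
  proof -
    define L where "L = max (4/c) (2*c)"
    define U where "U = 9/(2*c)"
    have "c*c < (3/2)*(3/2)" using c0 assms(2) by (intro mult_strict_mono) auto
    then have "2*c < U" using c0 by (simp add: U_def field_simps)
    moreover have "4/c < U" using c0 by (simp add: U_def field_simps)
    ultimately have LU: "L < U" by (simp add: L_def)
    have L41: "4/c > 1" using c0 assms(2) by (simp add: field_simps)
    have L1: "L > 1" using L41 by (simp add: L_def)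
    define \<alpha> where "\<alpha> = (2*L + U)/3"
    define \<beta> where "\<beta> = (L + 2*U)/3"
    have ab: "L < \<alpha>" "\<alpha> < \<beta>" "\<beta> < U" using LU by (simp_all add: \<alpha>_def \<beta>_def)
    have apos: "\<alpha> > 0" using ab L1 by linarith
    define St where "St = {z. \<bar>Re z\<bar> \<le> 1/2 \<and> \<alpha> \<le> Im z \<and> Im z \<le> \<beta>}"
    have Stc: "closed St" unfolding St_def by (intro closed_Collect_conj closed_Collect_le continuous_intros)
    then have Stb: "St \<in> sets borel" by (simp add: borel_closed)
    have StF: "St \<subseteq> Fdom"
    proof
      fix z assume "z \<in> St"
      then have z: "\<bar>Re z\<bar> \<le> 1/2" "Im z > 1" using ab L1 by (auto simp: St_def)
      have "\<bar>Im z\<bar> \<le> cmod z" by (rule abs_Im_le_cmod)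
      then show "z \<in> Fdom" using z by (auto simp: Fdom_def H_def)
    qed
    have disj: "z \<notin> Ec_lift c" if "z \<in> St" for z
    proof (rule strip_disjoint[OF c0 assms(2)])
      have "\<alpha> \<le> Im z" "Im z \<le> \<beta>" using that by (auto simp: St_def)
      then show "Im z > 4/c" "Im z > 2*c" "Im z < 9/(2*c)" using ab by (auto simp: L_def U_def)
    qed
    have dd: "(\<lambda>z. ennreal (3 / (pi * (Im z)^2))) = dens" by (simp add: dens_def fun_eq_iff)
    have sub: "Ec_lift c \<inter> Fdom \<subseteq> Fdom - St" using disj by auto
    have "muM (Ec_lift c) = emeasure (density lborel dens) (Ec_lift c \<inter> Fdom)"
      by (simp add: muM_def dd)
    also have "\<dots> \<le> emeasure (density lborel dens) (Fdom - St)"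
      by (rule emeasure_mono[OF sub]) (use Stb in simp)
    also have "\<dots> = emeasure (density lborel dens) Fdom - emeasure (density lborel dens) St"
      by (rule emeasure_Diff) (use Stb StF nu_strip[of \<alpha> \<beta>] apos ab in \<open>auto simp: St_def\<close>)
    also have "\<dots> = 1 - ennreal (3/pi * (1/\<alpha> - 1/\<beta>))"
      using nu_Fdom nu_strip[of \<alpha> \<beta>] apos ab by (simp add: St_def)
    also have "\<dots> < 1"
    proof -
      have Kpos: "3/pi * (1/\<alpha> - 1/\<beta>) > 0" using apos ab by (simp add: field_simps)
      have "1 - ennreal (3/pi * (1/\<alpha> - 1/\<beta>)) = ennreal (1 - 3/pi * (1/\<alpha> - 1/\<beta>))"
        using ennreal_minus[of "3/pi * (1/\<alpha> - 1/\<beta>)" 1] Kpos by simp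
      also have "\<dots> < ennreal 1" using Kpos by (intro ennreal_lessI) auto
      finally show ?thesis by simp
    qed
    finally show ?thesis .
  qed
  have inf: "infinite {n::nat. n > 0 \<and> Rn_lift n x (c / (real n)^2) \<subseteq> Ec_lift c}"
    if "0 \<le> x \<and> x < 1 \<and> x \<notin> \<rat>" for x
  proof -
    have x: "x \<notin> \<rat>" using that by simp
    show ?thesis unfolding infinite_nat_iff_unbounded_le
    proof
      fix m
      obtain n p where n: "n \<ge> m" "n > 0" "\<bar>x - real_of_int p / real n\<bar> \<le> 1/(sqrt 5 * (real n)^2)"
        using infinite_good[OF x, of m] by blast
      have "Rn_lift n x (c / (real n)^2) \<subseteq> Ec_lift c" by (rule good_n[OF assms(1) n(2) n(3)])
      then show "\<exists>n\<ge>m. n \<in> {n::nat. n > 0 \<and> Rn_lift n x (c / (real n)^2) \<subseteq> Ec_lift c}"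
        using n by auto
    qed
  qed
  show ?thesis using cl bor meas inf by simp
qed

end
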